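(* Let $\bar x$ be a sparsest solution of problem (P), and let $\tilde X$ be an optimal solution of the QBP program for some $\lambda\ge0$. Suppose that: - $\operatorname{rank}(\tilde X)=1$; - $\|\tilde X\|_0<\tfrac12\left(1+\tfrac{1}{\mu(\mathbf{B})}\right)$, with the convention $1/0=\infty$. Then $\tilde X=\begin{bmatrix}1\\ \bar x\end{bmatrix}\begin{bmatrix}1 & \bar x^H\end{bmatrix}$.
   Context: Fix integers $n,N\ge 1$ and data $a_i\in\mathbb{C}$, $b_i,c_i\in\mathbb{C}^n$, $Q_i\in\mathbb{C}^{n\times n}$, $y_i\in\mathbb{C}$ for $i=1,\dots,N$. Problem (P) is $$\min_{x\in\mathbb{C}^n}\|x\|_0\quad\text{subject to}\quad y_i=a_i+b_i^H x+x^H c_i+x^H Q_i x,\quad i=1,\dots,N.$$ Here $\|\cdot\|_0$ counts nonzero entries of a vector or matrix, and ${}^H$ denotes conjugate transpose. Let $\Phi_i=\begin{bmatrix} a_i & b_i^H\\ c_i & Q_i\end{bmatrix}\in\mathbb{C}^{(n+1)\times(n+1)}$. Define the linear operator $B:\mathbb{C}^{(n+1)\times(n+1)}\to\mathbb{C}^N$ by $B(X)=(\operatorname{tr}(\Phi_i X))_{i=1}^N$. The QBP program with parameter $\lambda\ge0$ is $$\min_{X}\ \operatorname{tr}(X)+\lambda\|X\|_1\quad\text{subject to}\quad y_i=\operatorname{tr}(\Phi_i X)\ (i=1,\dots,N),\quad X_{1,1}=1,\quad X\succeq0,$$ where $X$ ranges over Hermitian $(n+1)\times(n+1)$ matrices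 and $\|X\|_1$ is the sum of absolute values of the entries. Let $\mathbf{B}\in\mathbb{C}^{N\times(n+1)^2}$ be the matrix satisfying $B(X)=\mathbf{B}\,\mathrm{vec}(X)$ for all $X$, where $\mathrm{vec}(X)$ is the vectorization of $X$ (stacking its entries into a vector). Assume every column of $\mathbf{B}$ is nonzero. For a matrix $A$ with nonzero columns $A_{:,1},\dots,A_{:,m}$, the mutual coherence is $\mu(A)=\max_{i\ne j}\frac{|A_{:,i}^H A_{:,j}|}{\|A_{:,i}\|\,\|A_{:,j}\|}$, with Euclidean norms. *)

theory Defs
  imports "HOL-Analysis.Analysis"
begin

text \<open>Indices of (n+1)-dimensional objects are the type unit + 'n:
  Inl () is the leading index 1, Inr j are the indices of x.\<close>

definition l0vec :: "complex^'n \<Rightarrow> nat" where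
  "l0vec x = card {j. x $ j \<noteq> 0}"

definition l0mat :: "complex^'m^'m \<Rightarrow> nat" where
  "l0mat X = card {(p, q). X $ p $ q \<noteq> 0}"

definition l1mat :: "complex^'m^'m \<Rightarrow> real" where
  "l1mat X = (\<Sum>p\<in>UNIV. \<Sum>q\<in>UNIV. cmod (X $ p $ q))"

definition mtrace :: "complex^'m^'m \<Rightarrow> complex" where
  "mtrace X = (\<Sum>p\<in>UNIV. X $ p $ p)"

definition hermitian :: "complex^'m^'m \<Rightarrow> bool" where
  "hermitian X \<longleftrightarrow> (\<forall>p q. X $ q $ p = cnj (X $ p $ q))"

definition psd :: "complex^'m^'m \<Rightarrow> bool" where
  "psd X \<longleftrightarrow> hermitian X \<and>
     (\<forall>v::complex^'m. (\<Sum>p\<in>UNIV. \<Sum>q\<in>UNIV. cnj (v $ p) * X $ p $ q * v $ q) \<in> \<real> \<and>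
        Re (\<Sum>p\<in>UNIV. \<Sum>q\<in>UNIV. cnj (v $ p) * X $ p $ q * v $ q) \<ge> 0)"

definition qmeas :: "complex \<Rightarrow> complex^'n \<Rightarrow> complex^'n \<Rightarrow> complex^'n^'n \<Rightarrow> complex^'n \<Rightarrow> complex" where
  "qmeas a b c Q x = a + (\<Sum>j\<in>UNIV. cnj (b $ j) * x $ j) + (\<Sum>j\<in>UNIV. cnj (x $ j) * c $ j)
     + (\<Sum>j\<in>UNIV. \<Sum>k\<in>UNIV. cnj (x $ j) * Q $ j $ k * x $ k)"

definition Phi :: "complex \<Rightarrow> complex^'n \<Rightarrow> complex^'n \<Rightarrow> complex^'n^'n \<Rightarrow> complex^(unit + 'n)^(unit + 'n)" where
  "Phi a b c Q = (\<chi> p q. case p of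
       Inl _ \<Rightarrow> (case q of Inl _ \<Rightarrow> a | Inr k \<Rightarrow> cnj (b $ k))
     | Inr j \<Rightarrow> (case q of Inl _ \<Rightarrow> c $ j | Inr k \<Rightarrow> Q $ j $ k))"

text \<open>Matrix B with B(X) = B vec(X): row i, column (p,q) holds the coefficient of X_{pq}
  in tr(Phi_i X), namely (Phi_i)_{qp}.\<close>
definition Bmat :: "('k \<Rightarrow> complex) \<Rightarrow> ('k \<Rightarrow> complex^'n) \<Rightarrow> ('k \<Rightarrow> complex^'n) \<Rightarrow> ('k \<Rightarrow> complex^'n^'n)
    \<Rightarrow> complex^((unit + 'n) \<times> (unit + 'n))^'k" where
  "Bmat a b c Q = (\<chi> i pq. Phi (a i) (b i) (c i) (Q i) $ snd pq $ fst pq)"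

definition cinner :: "complex^'r \<Rightarrow> complex^'r \<Rightarrow> complex" where
  "cinner u v = (\<Sum>i\<in>UNIV. cnj (u $ i) * v $ i)"

definition coherence :: "complex^'c^'r \<Rightarrow> real" where
  "coherence A = Max {cmod (cinner (column i A) (column j A)) / (norm (column i A) * norm (column j A))
                      | i j. i \<noteq> j}"

definition lift :: "complex^'n \<Rightarrow> complex^(unit + 'n)" where
  "lift x = (\<chi> p. case p of Inl _ \<Rightarrow> 1 | Inr j \<Rightarrow> x $ j)"

definition outer :: "complex^'m \<Rightarrow> complex^'m^'m" where
  "outer v = (\<chi> p q. v $ p * cnj (v $ q))"

definition feasible_P :: "('k \<Rightarrow> complex) \<Rightarrow> ('k \<Rightarrow> complex^'n) \<Rightarrow> ('k \<Rightarrow> complex^'n) \<Rightarrow> ('k \<Rightarrow> complex^'n^'n)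
    \<Rightarrow> ('k \<Rightarrow> complex) \<Rightarrow> complex^'n \<Rightarrow> bool" where
  "feasible_P a b c Q y x \<longleftrightarrow> (\<forall>i. y i = qmeas (a i) (b i) (c i) (Q i) x)"

definition sparsest_P where
  "sparsest_P a b c Q y x \<longleftrightarrow> feasible_P a b c Q y x \<and>
     (\<forall>x'. feasible_P a b c Q y x' \<longrightarrow> l0vec x \<le> l0vec x')"

definition feasible_QBP :: "('k \<Rightarrow> complex) \<Rightarrow> ('k \<Rightarrow> complex^'n) \<Rightarrow> ('k \<Rightarrow> complex^'n) \<Rightarrow> ('k \<Rightarrow> complex^'n^'n)
    \<Rightarrow> ('k \<Rightarrow> complex) \<Rightarrow> complex^(unit + 'n)^(unit + 'n) \<Rightarrow> bool" where
  "feasible_QBP a b c Q y X \<longleftrightarrow>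
     (\<forall>i. y i = mtrace (Phi (a i) (b i) (c i) (Q i) ** X)) \<and> X $ Inl () $ Inl () = 1 \<and> psd X"

text \<open>tr(X) is real for Hermitian X; the objective uses its real part.\<close>
definition qbp_obj :: "real \<Rightarrow> complex^'m^'m \<Rightarrow> real" where
  "qbp_obj lam X = Re (mtrace X) + lam * l1mat X"

definition optimal_QBP where
  "optimal_QBP lam a b c Q y X \<longleftrightarrow> feasible_QBP a b c Q y X \<and>
     (\<forall>X'. feasible_QBP a b c Q y X' \<longrightarrow> qbp_obj lam X \<le> qbp_obj lam X')"

end

theory Submission
  imports Defs
begin

lemma sum_unit_plus:
  fixes f :: "unit + 'n::finite \<Rightarrow> 'a::comm_monoid_add"
  shows "(\<Sum>p\<in>UNIV. f p) = f (Inl ()) + (\<Sum>j\<in>UNIV. f (Inr j))"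
proof -
  have "(\<Sum>p\<in>UNIV. f p) = (\<Sum>p\<in>(UNIV <+> UNIV). f p)" by simp
  also have "\<dots> = (\<Sum>u\<in>UNIV. f (Inl u)) + (\<Sum>j\<in>UNIV. f (Inr j))"
    by (subst sum.Plus) (auto simp: o_def)
  also have "(\<Sum>u\<in>UNIV. f (Inl u)) = f (Inl ())"
    by (simp add: UNIV_unit)
  finally show ?thesis by simp
qed

lemma trace_outer_lift:
  fixes x :: "complex^'n::finite"
  shows "mtrace (Phi a b c Q ** outer (lift x)) = qmeas a b c Q x"
  unfolding mtrace_def matrix_matrix_mult_def qmeas_def
  by (simp add: sum_unit_plus Phi_def outer_def lift_def sum.distrib algebra_simps)

lemma l0vec_lift: "l0vec (lift x) = Suc (l0vec x)"
proof -
  have "{p. lift x $ p \<noteq> 0} = insert (Inl ()) (Inr ` {j. x $ j \<noteq> 0})"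
    apply (rule set_eqI)
    subgoal for p by (cases p) (auto simp: lift_def)
    done
  then show ?thesis unfolding l0vec_def
    by (simp add: card_image inj_on_def image_iff)
qed

lemma l0mat_outer: "l0mat (outer v) = l0vec v * l0vec v"
proof -
  have "{(p, q). outer v $ p $ q \<noteq> 0} = {p. v $ p \<noteq> 0} \<times> {p. v $ p \<noteq> 0}"
    by (auto simp: outer_def)
  then show ?thesis unfolding l0mat_def l0vec_def by (simp add: card_cartesian_product)
qed

lemma Bmat_row:
  fixes M :: "complex^(unit + 'n::finite)^(unit + 'n)"
  shows "(\<Sum>pq\<in>UNIV. Bmat a b c Q $ i $ pq * M $ fst pq $ snd pq)
     = mtrace (Phi (a i) (b i) (c i) (Q i) ** M)"
proof -
  have "(\<Sum>pq\<in>UNIV. Bmat a b c Q $ i $ pq * M $ fst pq $ snd pq)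
     = (\<Sum>p\<in>UNIV. \<Sum>q\<in>UNIV. Phi (a i) (b i) (c i) (Q i) $ q $ p * M $ p $ q)"
    unfolding Bmat_def UNIV_Times_UNIV[symmetric] sum.cartesian_product by (simp add: case_prod_beta)
  also have "\<dots> = (\<Sum>q\<in>UNIV. \<Sum>p\<in>UNIV. Phi (a i) (b i) (c i) (Q i) $ q $ p * M $ p $ q)"
    by (rule sum.swap)
  finally show ?thesis by (simp add: mtrace_def matrix_matrix_mult_def)
qed

lemma norm_sq_vec: "(norm (u::complex^'r::finite))^2 = (\<Sum>i\<in>UNIV. (cmod (u$i))^2)"
  by (simp add: norm_vec_def L2_set_def sum_nonneg)

lemma cinner_self: "cinner u u = complex_of_real ((norm (u::complex^'r::finite))^2)"
  unfolding norm_sq_vec cinner_def of_real_sum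
  apply (intro sum.cong refl)
  subgoal for i using complex_norm_square[of "u$i"] by (simp add: mult.commute)
  done

lemma coh_finite: "finite {f i j | i j. (i::'c::finite) \<noteq> j}"
  by (rule finite_subset[of _ "(\<lambda>(i,j). f i j) ` UNIV"]) auto

lemma coh_ge:
  fixes A :: "complex^'c::finite^'r::finite"
  assumes "i \<noteq> j"
  shows "cmod (cinner (column i A) (column j A)) / (norm (column i A) * norm (column j A)) \<le> coherence A"
  unfolding coherence_def
  by (rule Max_ge[OF coh_finite]) (use assms in blast)

lemma spark:
  fixes A :: "complex^'c::finite^'r::finite" and z :: "complex^'c"
  assumes cols: "\<forall>c. column c A \<noteq> 0"
    and hz: "\<forall>r. (\<Sum>c\<in>UNIV. A$r$c * z$c) = 0"
    and nz: "z \<noteq> 0"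
    and mu0: "coherence A \<ge> 0"
  shows "1 \<le> coherence A * (real (card {c. z$c \<noteq> 0}) - 1)"
proof -
  define \<mu> where "\<mu> = coherence A"
  define nA where "nA c = norm (column c A)" for c
  define w where "w c = cmod (z$c) * nA c" for c
  define S where "S = {c. z$c \<noteq> 0}"
  have nApos: "nA c > 0" for c using cols by (simp add: nA_def)
  have "Max (range w) \<in> range w" by (rule Max_in) auto
  then obtain i where imax: "w i = Max (range w)" by (metis imageE)
  have wle: "w j \<le> w i" for j unfolding imax by (rule Max_ge) auto
  obtain j where "z$j \<noteq> 0" using nz by (metis vec_eq_iff zero_index)
  then have "w j > 0" using nApos[of j] by (simp add: w_def)
  then have wipos: "w i > 0" using wle[of j] by linarith
  then have zi: "z$i \<noteq> 0" by (auto simp: w_def)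
  have iS: "i \<in> S" using zi by (simp add: S_def)
  have key: "(\<Sum>c\<in>UNIV. cinner (column i A) (column c A) * z$c) = 0"
  proof -
    have "(\<Sum>c\<in>UNIV. cinner (column i A) (column c A) * z$c)
        = (\<Sum>c\<in>UNIV. \<Sum>r\<in>UNIV. cnj (A$r$i) * (A$r$c * z$c))"
      by (simp add: cinner_def column_def sum_distrib_right mult.assoc)
    also have "\<dots> = (\<Sum>r\<in>UNIV. cnj (A$r$i) * (\<Sum>c\<in>UNIV. A$r$c * z$c))"
      by (subst sum.swap) (simp add: sum_distrib_left)
    also have "\<dots> = 0" using hz by simp
    finally show ?thesis .
  qed
  have split: "(\<Sum>c\<in>UNIV. cinner (column i A) (column c A) * z$c)
      = cinner (column i A) (column i A) * z$i
        + (\<Sum>c\<in>UNIV-{i}. cinner (column i A) (column c A) * z$c)"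
    by (simp add: sum.remove)
  have eq: "complex_of_real ((nA i)^2) * z$i
      = - (\<Sum>c\<in>UNIV-{i}. cinner (column i A) (column c A) * z$c)"
    using key split by (simp add: cinner_self nA_def eq_neg_iff_add_eq_0)
  have "(nA i)^2 * cmod (z$i) = cmod (complex_of_real ((nA i)^2) * z$i)"
    by (simp only: norm_mult norm_of_real abs_power2)
  also have "\<dots> = cmod (\<Sum>c\<in>UNIV-{i}. cinner (column i A) (column c A) * z$c)"
    by (simp only: eq norm_minus_cancel)
  also have "\<dots> \<le> (\<Sum>c\<in>UNIV-{i}. cmod (cinner (column i A) (column c A)) * cmod (z$c))"
    by (rule order_trans[OF norm_sum]) (simp add: norm_mult)
  also have "\<dots> \<le> (\<Sum>c\<in>UNIV-{i}. \<mu> * nA i * w c)"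
  proof (rule sum_mono)
    fix c assume "c \<in> UNIV - {i}"
    then have "i \<noteq> c" by auto
    from coh_ge[OF this, of A]
    have "cmod (cinner (column i A) (column c A)) / (nA i * nA c) \<le> \<mu>"
      by (simp add: nA_def \<mu>_def)
    then have "cmod (cinner (column i A) (column c A)) \<le> \<mu> * (nA i * nA c)"
      using nApos[of i] nApos[of c] by (simp add: divide_le_eq)
    then have "cmod (cinner (column i A) (column c A)) * cmod (z$c) \<le> \<mu> * (nA i * nA c) * cmod (z$c)"
      by (rule mult_right_mono) simp
    then show "cmod (cinner (column i A) (column c A)) * cmod (z$c) \<le> \<mu> * nA i * w c"
      by (simp add: w_def mult_ac)
  qed
  also have "\<dots> = \<mu> * nA i * (\<Sum>c\<in>UNIV-{i}. w c)"
    by (simp add: sum_distrib_left)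
  finally have ineq1: "nA i * w i \<le> nA i * (\<mu> * (\<Sum>c\<in>UNIV-{i}. w c))"
    by (simp add: w_def power2_eq_square mult_ac)
  then have ineq2: "w i \<le> \<mu> * (\<Sum>c\<in>UNIV-{i}. w c)"
    using nApos[of i] by simp
  have "(\<Sum>c\<in>UNIV-{i}. w c) = (\<Sum>c\<in>S-{i}. w c)"
    by (rule sum.mono_neutral_right) (auto simp: S_def w_def)
  also have "\<dots> \<le> real (card (S-{i})) * w i"
    using wle by (simp add: sum_bounded_above)
  also have "real (card (S-{i})) = real (card S) - 1"
  proof -
    have "card S > 0" using iS by (auto simp: card_gt_0_iff)
    then show ?thesis using iS by (simp add: card_Diff_singleton of_nat_diff)
  qed
  finally have "(\<Sum>c\<in>UNIV-{i}. w c) \<le> (real (card S) - 1) * w i" .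
  then have "w i \<le> \<mu> * ((real (card S) - 1) * w i)"
    using ineq2 mu0 unfolding \<mu>_def by (meson mult_left_mono order_trans)
  then have "1 * w i \<le> (\<mu> * (real (card S) - 1)) * w i" by (simp add: mult_ac)
  then have "1 \<le> \<mu> * (real (card S) - 1)" using wipos by (rule mult_right_le_imp_le)
  then show ?thesis by (simp add: \<mu>_def S_def)
qed

lemma rank1:
  fixes X :: "complex^'m::finite^'m" assumes "rank X = 1"
  obtains u c where "\<forall>p q. X$p$q = c p * u$q"
proof -
  obtain B where B: "B \<subseteq> rows X" "vec.independent B" "rows X \<subseteq> vec.span B" "card B = vec.dim (rows X)"
    by (rule vec.basis_exists)
  with assms have "card B = 1" by (simp add: row_rank_def_gen)
  then obtain u where u: "B = {u}" by (rule card_1_singletonE)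
  have "\<forall>p. \<exists>k. row p X = k *s u"
  proof
    fix p
    have "row p X \<in> rows X" by (auto simp: rows_def)
    with B(3) u have "row p X \<in> vec.span {u}" by auto
    then show "\<exists>k. row p X = k *s u" by (auto simp: vec.span_singleton)
  qed
  then obtain c where c: "\<And>p. row p X = c p *s u" by metis
  have "\<forall>p q. X$p$q = c p * u$q"
  proof (intro allI)
    fix p q
    have "row p X $ q = (c p *s u) $ q" by (simp add: c)
    then show "X$p$q = c p * u$q" by (simp add: row_def)
  qed
  then show ?thesis using that by blast
qed

theorem mainTheorem5:
  fixes a :: "'k::finite \<Rightarrow> complex" and b c :: "'k \<Rightarrow> complex^'n"
    and Q :: "'k \<Rightarrow> complex^'n^'n" and y :: "'k \<Rightarrow> complex"
    and lam :: real and xbar :: "complex^'n" and Xt :: "complex^(unit + 'n)^(unit + 'n)"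
  assumes cols: "\<forall>pq. column pq (Bmat a b c Q) \<noteq> 0"
    and lam: "lam \<ge> 0"
    and sp: "sparsest_P a b c Q y xbar"
    and opt: "optimal_QBP lam a b c Q y Xt"
    and rk: "rank Xt = 1"
    and small: "coherence (Bmat a b c Q) = 0 \<or>
                real (l0mat Xt) < (1 + 1 / coherence (Bmat a b c Q)) / 2"
  shows "Xt = outer (lift xbar)"
proof (rule ccontr)
  assume neq: "Xt \<noteq> outer (lift xbar)"
  from opt have eqs: "\<And>i. y i = mtrace (Phi (a i) (b i) (c i) (Q i) ** Xt)"
    and X11: "Xt $ Inl () $ Inl () = 1" and herm: "hermitian Xt"
    by (auto simp: optimal_QBP_def feasible_QBP_def psd_def)
  obtain u cc where uc: "\<forall>p q. Xt$p$q = cc p * u$q" using rank1[OF rk] by blast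
  have fact: "Xt$p$q = Xt$p$Inl () * cnj (Xt$q$Inl ())" for p q
  proof -
    have "Xt$p$q = Xt$p$q * Xt $ Inl () $ Inl ()" by (simp add: X11)
    also have "\<dots> = Xt$p$Inl () * Xt$Inl ()$q" by (simp only: uc[rule_format]) (simp only: mult_ac)
    also have "Xt$Inl ()$q = cnj (Xt$q$Inl ())" using herm[unfolded hermitian_def, rule_format, of q "Inl ()"] by simp
    finally show ?thesis .
  qed
  define xt where "xt = (\<chi> j. Xt $ Inr j $ Inl ())"
  have lx: "lift xt $ p = Xt$p$Inl ()" for p
    by (cases p) (auto simp: lift_def xt_def X11)
  have XtO: "Xt = outer (lift xt)"
    by (simp add: vec_eq_iff outer_def lx fact[symmetric])
  have "feasible_P a b c Q y xt"
    unfolding feasible_P_def using eqs XtO trace_outer_lift by metis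
  with sp have le0: "l0vec xbar \<le> l0vec xt" by (simp add: sparsest_P_def)
  from sp have eqb: "\<And>i. y i = mtrace (Phi (a i) (b i) (c i) (Q i) ** outer (lift xbar))"
    by (simp add: sparsest_P_def feasible_P_def trace_outer_lift)
  define Ob where "Ob = outer (lift xbar)"
  have lO: "l0mat Ob \<le> l0mat Xt"
    unfolding Ob_def XtO l0mat_outer l0vec_lift using mult_le_mono[OF Suc_le_mono[THEN iffD2, OF le0] Suc_le_mono[THEN iffD2, OF le0]] by simp
  define z :: "complex^((unit + 'n) \<times> (unit + 'n))"
    where "z = (\<chi> pq. Xt $ fst pq $ snd pq - Ob $ fst pq $ snd pq)"
  have znz: "z \<noteq> 0"
  proof
    assume "z = 0"
    then have "Xt $ p $ q = Ob $ p $ q" for p q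
      by (auto simp: vec_eq_iff z_def dest: spec[of _ "(p,q)"])
    then have "Xt = Ob" by (simp add: vec_eq_iff)
    with neq show False by (simp add: Ob_def)
  qed
  have hz: "\<forall>i. (\<Sum>pq\<in>UNIV. Bmat a b c Q $ i $ pq * z $ pq) = 0"
  proof
    fix i
    have "(\<Sum>pq\<in>UNIV. Bmat a b c Q $ i $ pq * z $ pq)
      = (\<Sum>pq\<in>UNIV. Bmat a b c Q $ i $ pq * Xt $ fst pq $ snd pq)
        - (\<Sum>pq\<in>UNIV. Bmat a b c Q $ i $ pq * Ob $ fst pq $ snd pq)"
      by (simp add: z_def right_diff_distrib sum_subtractf)
    also have "\<dots> = 0" unfolding Bmat_row Ob_def using eqs eqb by (metis diff_self)
    finally show "(\<Sum>pq\<in>UNIV. Bmat a b c Q $ i $ pq * z $ pq) = 0" .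
  qed
  have mu0: "coherence (Bmat a b c Q) \<ge> 0"
  proof -
    have ne: "(Inl (), Inl ()) \<noteq> ((Inl (), Inr undefined) :: (unit + 'n) \<times> (unit + 'n))" by simp
    show ?thesis using coh_ge[OF ne, of "Bmat a b c Q"] by (meson order_trans divide_nonneg_nonneg mult_nonneg_nonneg norm_ge_zero)
  qed
  have sp1: "1 \<le> coherence (Bmat a b c Q) * (real (card {pq. z$pq \<noteq> 0}) - 1)"
    by (rule spark[OF cols hz znz mu0])
  have "{pq. z$pq \<noteq> 0} \<subseteq> {(p, q). Xt $ p $ q \<noteq> 0} \<union> {(p, q). Ob $ p $ q \<noteq> 0}"
    by (auto simp: z_def)
  then have "card {pq. z$pq \<noteq> 0} \<le> card ({(p, q). Xt $ p $ q \<noteq> 0} \<union> {(p, q). Ob $ p $ q \<noteq> 0})"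
    by (rule card_mono[rotated]) simp
  also have "\<dots> \<le> l0mat Xt + l0mat Ob" unfolding l0mat_def by (rule card_Un_le)
  finally have cz: "real (card {pq. z$pq \<noteq> 0}) \<le> 2 * real (l0mat Xt)" using lO by linarith
  define \<mu> where "\<mu> = coherence (Bmat a b c Q)"
  show False
  proof (cases "\<mu> = 0")
    case True then show False using sp1 by (simp add: \<mu>_def)
  next
    case False
    then have mpos: "\<mu> > 0" using mu0 by (simp add: \<mu>_def)
    from small False have "real (l0mat Xt) < (1 + 1 / \<mu>) / 2" by (simp add: \<mu>_def)
    then have "real (l0mat Xt) * 2 < 1 + 1 / \<mu>" by (simp only: less_divide_eq_numeral1)
    then have "real (card {pq. z$pq \<noteq> 0}) - 1 < 1 / \<mu>" using cz by linarith
    then have "\<mu> * (real (card {pq. z$pq \<noteq> 0}) - 1) < \<mu> * (1 / \<mu>)"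
      using mpos by (rule mult_strict_left_mono)
    then show False using sp1 mpos by (simp add: \<mu>_def)
  qed
qed

end
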